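(* Let $\mathbb{G}$ be a homogeneous group of homogeneous dimension $Q\geq 3$ and $|\cdot|$ any homogeneous quasi-norm on $\mathbb{G}$. Then for every $f\in C_0^\infty(\mathbb{G}\setminus\{0\})$, $$\|f\|^2_{L^2(\mathbb{G})}\leq\frac{2}{Q-2}\,\|\mathcal{R}f\|_{L^2(\mathbb{G})}\,\big\||x|f\big\|_{L^2(\mathbb{G})}.$$
   Context: A homogeneous group $\mathbb{G}$ is a Lie group whose underlying manifold is $\mathbb{R}^n$, equipped with dilations $D_\lambda(x)=(\lambda^{\nu_1}x_1,\dots,\lambda^{\nu_n}x_n)$, $\nu_1,\dots,\nu_n>0$, such that each $D_\lambda$ ($\lambda>0$) is a group automorphism. Its homogeneous dimension is $Q=\nu_1+\dots+\nu_n$. The Haar measure $dx$ on $\mathbb{G}$ is Lebesgue measure on $\mathbb{R}^n$, and $L^2(\mathbb{G})$ is taken with respect to it. A homogeneous quasi-norm is a continuous function $x\mapsto|x|\in[0,\infty)$ with $|x^{-1}|=|x|$, $|D_\lambda x|=\lambda|x|$ for all $\lambda>0$, and $|x|=0$ iff $x=0$. The radial derivative $\mathcal{R}$ is defined for $x\neq 0$ by $\mathcal{R}f(x)=\frac{d}{dr}\big[f(D_r y)\big]\big|_{r=|x|}$, where $y=D_{1/|x|}x$; i.e. $\mathcal{R}=\frac{d}{d|x|}$ is differentiation along the dilation orbits with respect to $r=|x|$. *)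

theory Defs
  imports "HOL-Analysis.Analysis"
begin

fun C_k :: "nat \<Rightarrow> ('a::euclidean_space \<Rightarrow> 'b::real_normed_vector) \<Rightarrow> bool" where
  "C_k 0 f = continuous_on UNIV f"
| "C_k (Suc k) f = (continuous_on UNIV f \<and> (\<forall>x. f differentiable (at x)) \<and>
      (\<forall>v. C_k k (\<lambda>x. frechet_derivative f (at x) v)))"

definition smooth_fun :: "('a::euclidean_space \<Rightarrow> 'b::real_normed_vector) \<Rightarrow> bool" where
  "smooth_fun f \<longleftrightarrow> (\<forall>k. C_k k f)"

definition dil :: "('n::finite \<Rightarrow> real) \<Rightarrow> real \<Rightarrow> real^'n \<Rightarrow> real^'n" where
  "dil \<nu> l x = (\<chi> i. (l powr \<nu> i) * (x $ i))"

definition homogeneous_group ::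
  "('n::finite \<Rightarrow> real) \<Rightarrow> (real^'n \<Rightarrow> real^'n \<Rightarrow> real^'n) \<Rightarrow> (real^'n \<Rightarrow> real^'n) \<Rightarrow> bool" where
  "homogeneous_group \<nu> gmul ginv \<longleftrightarrow>
     (\<forall>i. \<nu> i > 0) \<and>
     (\<forall>x y z. gmul (gmul x y) z = gmul x (gmul y z)) \<and>
     (\<exists>e. \<forall>x. gmul e x = x \<and> gmul x e = x \<and> gmul (ginv x) x = e \<and> gmul x (ginv x) = e) \<and>
     smooth_fun (\<lambda>p::(real^'n) \<times> (real^'n). gmul (fst p) (snd p)) \<and>
     smooth_fun ginv \<and>
     (\<forall>l>0. \<forall>x y. dil \<nu> l (gmul x y) = gmul (dil \<nu> l x) (dil \<nu> l y))"

definition hom_dim :: "('n::finite \<Rightarrow> real) \<Rightarrow> real" where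
  "hom_dim \<nu> = (\<Sum>i\<in>UNIV. \<nu> i)"

definition hom_quasi_norm ::
  "('n::finite \<Rightarrow> real) \<Rightarrow> (real^'n \<Rightarrow> real^'n) \<Rightarrow> (real^'n \<Rightarrow> real) \<Rightarrow> bool" where
  "hom_quasi_norm \<nu> ginv q \<longleftrightarrow>
     continuous_on UNIV q \<and> (\<forall>x. q x \<ge> 0) \<and> (\<forall>x. q (ginv x) = q x) \<and>
     (\<forall>l>0. \<forall>x. q (dil \<nu> l x) = l * q x) \<and> (\<forall>x. q x = 0 \<longleftrightarrow> x = 0)"

definition radial_deriv ::
  "('n::finite \<Rightarrow> real) \<Rightarrow> (real^'n \<Rightarrow> real) \<Rightarrow> (real^'n \<Rightarrow> complex) \<Rightarrow> real^'n \<Rightarrow> complex" where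
  "radial_deriv \<nu> q f x =
     (if x = 0 then 0
      else vector_derivative (\<lambda>r. f (dil \<nu> r (dil \<nu> (1 / q x) x))) (at (q x)))"

text \<open>L^2 norm with respect to Lebesgue (= Haar) measure.\<close>
definition L2norm :: "('a::euclidean_space \<Rightarrow> 'b::real_normed_vector) \<Rightarrow> real" where
  "L2norm g = sqrt (LINT x|lborel. (norm (g x))\<^sup>2)"

end

theory Submission
  imports Defs
begin


lemma sum_axis_vec: "(\<Sum>i\<in>UNIV. c i *\<^sub>R (axis i 1 :: real^'n::finite)) = (\<chi> i. c i)"
  by (simp add: vec_eq_iff axis_def if_distrib sum.If_cases cong del: if_weak_cong)

lemma linear_on_vec:
  fixes L :: "real^'n::finite \<Rightarrow> 'b::real_normed_vector"
  assumes "bounded_linear L"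
  shows "L (\<chi> i. c i) = (\<Sum>i\<in>UNIV. c i *\<^sub>R L (axis i 1))"
proof -
  interpret bounded_linear L by fact
  show ?thesis
    by (subst sum_axis_vec[symmetric]) (simp add: sum scaleR)
qed

definition edil :: "('n::finite \<Rightarrow> real) \<Rightarrow> real \<Rightarrow> real^'n \<Rightarrow> real^'n" where
  "edil \<nu> r x = (\<chi> i. \<nu> i * r powr (\<nu> i - 1) * x $ i)"

lemma dil_vector_deriv:
  fixes x :: "real^'n::finite"
  assumes "r > 0"
  shows "((\<lambda>r. dil \<nu> r x) has_vector_derivative edil \<nu> r x) (at r)"
proof -
  have 1: "(\<lambda>r. dil \<nu> r x) = (\<lambda>r. \<Sum>i\<in>UNIV. (r powr \<nu> i * x $ i) *\<^sub>R (axis i 1 :: real^'n))"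
    by (simp add: sum_axis_vec dil_def)
  have 2: "edil \<nu> r x = (\<Sum>i\<in>UNIV. (\<nu> i * r powr (\<nu> i - 1) * x $ i) *\<^sub>R (axis i 1 :: real^'n))"
    by (simp add: sum_axis_vec edil_def)
  show ?thesis
    unfolding 1 2
    apply (rule has_vector_derivative_sum)
    apply (rule has_vector_derivative_eq_rhs)
     apply (rule has_vector_derivative_scaleR[where g="\<lambda>_. axis _ 1"])
      apply (rule derivative_eq_intros | use assms in simp)+
    done
qed

lemma dil_1[simp]: "dil \<nu> 1 x = x"
  by (simp add: dil_def vec_eq_iff)

lemma dil_dil: "dil \<nu> r (dil \<nu> s x) = dil \<nu> (r * s) x"
  by (simp add: dil_def vec_eq_iff powr_mult)

lemma edil_1: "edil \<nu> 1 x = (\<chi> i. \<nu> i * x $ i)"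
  by (simp add: edil_def)

lemma continuous_on_dil:
  "continuous_on ({0<..} \<times> UNIV) (\<lambda>(r, x). dil \<nu> r x)"
  unfolding dil_def split_beta
  by (intro continuous_intros continuous_on_powr) auto

lemma continuous_on_edil:
  "continuous_on ({0<..} \<times> UNIV) (\<lambda>(r, x). edil \<nu> r x)"
  unfolding edil_def split_beta
  by (intro continuous_intros continuous_on_powr) auto



lemma integrable_cont_compact:
  fixes g :: "real^'n::finite \<Rightarrow> real"
  assumes "continuous_on UNIV g" "compact K" "\<And>x. x \<notin> K \<Longrightarrow> g x = 0"
  shows "integrable lborel g" "(g has_integral (integral\<^sup>L lborel g)) UNIV"
proof -
  have "integrable lborel (\<lambda>x. indicator K x *\<^sub>R g x)"
    by (rule borel_integrable_compact[OF assms(2)]) (rule continuous_on_subset[OF assms(1)], simp)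
  moreover have "(\<lambda>x. indicator K x *\<^sub>R g x) = g"
    using assms(3) by (auto simp: indicator_def fun_eq_iff)
  ultimately show 1: "integrable lborel g" by simp
  show "(g has_integral (integral\<^sup>L lborel g)) UNIV"
    by (rule has_integral_integral_lborel[OF 1])
qed

lemma has_integral_restrict_to:
  fixes g :: "real^'n::finite \<Rightarrow> real"
  assumes "(g has_integral I) UNIV" "\<And>x. x \<notin> T \<Longrightarrow> g x = 0"
  shows "(g has_integral I) T"
proof -
  have "(\<lambda>x. if x \<in> T then g x else 0) = g" using assms(2) by auto
  with assms(1) have "((\<lambda>x. if x \<in> T then g x else 0) has_integral I) UNIV" by simp
  then show ?thesis by (simp only: has_integral_restrict_UNIV)
qed

lemma has_integral_dil:
  fixes h :: "real^'n::finite \<Rightarrow> real"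
  assumes "(h has_integral A) UNIV" "\<And>x. x \<notin> cbox a b \<Longrightarrow> h x = 0" "r > 0"
  shows "((\<lambda>x. h (dil \<nu> r x)) has_integral A / r powr (sum \<nu> UNIV)) UNIV"
proof -
  have hb: "(h has_integral A) (cbox a b)" by (rule has_integral_restrict_to[OF assms(1,2)])
  define m where "m k = r powr \<nu> k" for k
  have m0: "\<And>k. m k \<noteq> 0" using assms(3) by (simp add: m_def)
  have pm: "prod m UNIV = r powr (sum \<nu> UNIV)"
    using assms(3) by (simp add: m_def powr_sum)
  have pos: "r powr (sum \<nu> UNIV) > 0" using assms(3) by simp
  have st: "((\<lambda>x. h(\<chi> k. m k * x$k)) has_integral A /\<^sub>R \<bar>prod m UNIV\<bar>)
            ((\<lambda>x. \<chi> k. x$k / m k) ` (cbox a b))"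
    by (rule has_integral_stretch_cart[OF hb m0])
  have eq: "(\<lambda>x. h(\<chi> k. m k * x$k)) = (\<lambda>x. h (dil \<nu> r x))"
    by (simp add: m_def dil_def)
  have "((\<lambda>x. h (dil \<nu> r x)) has_integral A /\<^sub>R \<bar>prod m UNIV\<bar>) UNIV"
  proof (rule has_integral_on_superset[OF st[unfolded eq]])
    fix x assume nx: "x \<notin> (\<lambda>x. \<chi> k. x$k / m k) ` (cbox a b)"
    show "h (dil \<nu> r x) = 0"
    proof (rule ccontr)
      assume "h (dil \<nu> r x) \<noteq> 0"
      then have "dil \<nu> r x \<in> cbox a b" using assms(2) by blast
      moreover have "x = (\<lambda>x. \<chi> k. x$k / m k) (dil \<nu> r x)"
        using m0 by (simp add: dil_def m_def vec_eq_iff)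
      ultimately show False using nx by blast
    qed
  qed simp
  moreover have "A /\<^sub>R \<bar>prod m UNIV\<bar> = A / r powr (sum \<nu> UNIV)"
    unfolding pm using pos by (simp add: divide_inverse mult.commute)
  ultimately show ?thesis by simp
qed



lemma amgm_t:
  fixes a b t :: real
  assumes "t > 0"
  shows "a * b \<le> (t * a\<^sup>2 + b\<^sup>2 / t) / 2"
proof -
  have "0 \<le> (t * a - b)\<^sup>2 / t" using assms by simp
  also have "(t * a - b)\<^sup>2 / t = t * a\<^sup>2 + b\<^sup>2 / t - 2 * a * b"
    using assms by (simp add: power2_eq_square field_simps)
  finally show ?thesis by simp
qed

lemma aux1: "(s::real) > 0 \<Longrightarrow> u / s * (s * s) = u * s" by simp
lemma aux2: "(u::real) > 0 \<Longrightarrow> (s::real) > 0 \<Longrightarrow> (u * u) / (u / s) = u * s" by simp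

lemma final_arith:
  fixes Q A B C :: real
  assumes Q: "Q > 2" and A: "A \<ge> 0" and B: "B \<ge> 0" and C: "C \<ge> 0"
    and H: "\<And>t. t > 0 \<Longrightarrow> Q * A \<le> t * C + B / t"
  shows "(sqrt A)\<^sup>2 \<le> 2 / (Q - 2) * sqrt B * sqrt C"
proof -
  have QA: "Q * A \<le> 2 * sqrt B * sqrt C"
  proof (cases "B > 0 \<and> C > 0")
    case True
    define t where "t = sqrt B / sqrt C"
    have tp: "t > 0" using True by (simp add: t_def)
    have sB: "sqrt B * sqrt B = B" and sC: "sqrt C * sqrt C = C" using B C by simp_all
    have sBp: "sqrt B > 0" and sCp: "sqrt C > 0" using True by simp_all
    have 1: "t * C = sqrt B * sqrt C"
    proof -
      have "t * C = sqrt B / sqrt C * (sqrt C * sqrt C)" using B C by (simp add: t_def sC)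
      also have "\<dots> = sqrt B * sqrt C"
        using sCp by (metis (no_types) aux1)
      finally show ?thesis .
    qed
    have 2: "B / t = sqrt B * sqrt C"
    proof -
      have "B / t = (sqrt B * sqrt B) / (sqrt B / sqrt C)" using B C by (simp add: t_def sB)
      also have "\<dots> = sqrt B * sqrt C" using sBp sCp by (metis (no_types) aux2)
      finally show ?thesis .
    qed
    show ?thesis using H[OF tp] 1 2 by simp
  next
    case False
    have "A \<le> 0"
    proof (rule ccontr)
      assume "\<not> A \<le> 0"
      then have Ap: "A > 0" by simp
      have QAp: "Q * A > 0" using Ap Q by simp
      show False
      proof (cases "C = 0")
        case True
        define t where "t = (B + 1) / (Q * A)"
        have tp: "t > 0" using QAp B by (simp add: t_def)
        have "B / t = B * (Q * A) / (B + 1)" using QAp B by (simp add: t_def)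
        also have "\<dots> < Q * A" using QAp B by (simp add: divide_less_eq algebra_simps)
        finally show False using H[OF tp] True by simp
      next
        case False
        then have B0: "B = 0" using \<open>\<not> (B > 0 \<and> C > 0)\<close> B C by auto
        have Cp: "C > 0" using False C by simp
        define t where "t = (Q * A) / (C + 1)"
        have tp: "t > 0" using QAp C by (simp add: t_def)
        have "t * C = Q * A * C / (C + 1)" by (simp add: t_def)
        also have "\<dots> < Q * A" using QAp C by (simp add: divide_less_eq algebra_simps)
        finally show False using H[OF tp] B0 by simp
      qed
    qed
    then have "A = 0" using A by simp
    then show ?thesis using B C by simp
  qed
  have sA: "(sqrt A)\<^sup>2 = A" using A by simp
  have P: "0 \<le> sqrt B * sqrt C" using B C by simp
  have "A \<le> 2 * sqrt B * sqrt C / Q" using QA Q by (simp add: field_simps)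
  also have "\<dots> \<le> 2 * sqrt B * sqrt C / (Q - 2)"
    using Q P by (intro divide_left_mono) auto
  finally show ?thesis using sA by simp
qed

lemma fdil_vd:
  fixes f :: "real^'n::finite \<Rightarrow> 'b::real_normed_vector"
  assumes fD: "\<And>x. (f has_derivative D x) (at x)" and Dl: "\<And>x. bounded_linear (D x)"
    and r: "r > 0"
  shows "((\<lambda>r. f (dil \<nu> r y)) has_vector_derivative D (dil \<nu> r y) (edil \<nu> r y)) (at r within U)"
proof -
  have 1: "((\<lambda>r. dil \<nu> r y) has_derivative (\<lambda>h. h *\<^sub>R edil \<nu> r y)) (at r within U)"
    using dil_vector_deriv[OF r, of \<nu> y] unfolding has_vector_derivative_def
    by (rule has_derivative_at_withinI)
  have 2: "((\<lambda>r. f (dil \<nu> r y)) has_derivative (\<lambda>h. D (dil \<nu> r y) (h *\<^sub>R edil \<nu> r y))) (at r within U)"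
    by (rule has_derivative_compose[OF 1 fD])
  interpret bounded_linear "D (dil \<nu> r y)" by (rule Dl)
  show ?thesis unfolding has_vector_derivative_def using 2 by (simp add: scaleR)
qed



lemma sq_deriv:
  fixes f :: "real^'n::finite \<Rightarrow> complex"
  assumes fD: "\<And>x. (f has_derivative D x) (at x)" and Dl: "\<And>x. bounded_linear (D x)"
    and r: "r > 0"
  shows "((\<lambda>r. (norm (f (dil \<nu> r y)))\<^sup>2) has_field_derivative
           2 * (f (dil \<nu> r y) \<bullet> D (dil \<nu> r y) (edil \<nu> r y))) (at r within U)"
proof -
  have v: "((\<lambda>r. f (dil \<nu> r y)) has_vector_derivative D (dil \<nu> r y) (edil \<nu> r y)) (at r within U)"
    by (rule fdil_vd[OF fD Dl r])
  have "((\<lambda>r. f (dil \<nu> r y) \<bullet> f (dil \<nu> r y)) has_vector_derivative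
      f (dil \<nu> r y) \<bullet> D (dil \<nu> r y) (edil \<nu> r y) + D (dil \<nu> r y) (edil \<nu> r y) \<bullet> f (dil \<nu> r y)) (at r within U)"
    by (rule bounded_bilinear.has_vector_derivative[OF bounded_bilinear_inner v v])
  then show ?thesis
    by (simp add: has_real_derivative_iff_has_vector_derivative power2_norm_eq_inner inner_commute)
qed

lemma cont_D_apply:
  fixes D :: "real^'n::finite \<Rightarrow> real^'n \<Rightarrow> 'b::real_normed_vector"
  assumes Dl: "\<And>x. bounded_linear (D x)" and Dc: "\<And>v. continuous_on UNIV (\<lambda>x. D x v)"
    and g: "continuous_on S g" and e: "continuous_on S e"
  shows "continuous_on S (\<lambda>s. D (g s) (e s))"
proof -
  have eq: "D (g s) (e s) = (\<Sum>i\<in>UNIV. (e s $ i) *\<^sub>R D (g s) (axis i 1))" for s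
    using linear_on_vec[OF Dl, of "g s" "\<lambda>i. e s $ i"] by simp
  have c: "continuous_on S (\<lambda>s. D (g s) (axis i 1))" for i
    by (rule continuous_on_compose2[OF Dc[of "axis i 1"] g]) auto
  show ?thesis unfolding eq
    by (intro continuous_intros c continuous_on_component e)
qed



theorem proposition3p3:
  fixes \<nu> :: "'n::finite \<Rightarrow> real"
    and gmul :: "real^'n \<Rightarrow> real^'n \<Rightarrow> real^'n"
    and ginv :: "real^'n \<Rightarrow> real^'n"
    and q :: "real^'n \<Rightarrow> real"
    and f :: "real^'n \<Rightarrow> complex"
  assumes "homogeneous_group \<nu> gmul ginv"
    and "hom_dim \<nu> \<ge> 3"
    and "hom_quasi_norm \<nu> ginv q"
    and "smooth_fun f"
    and "compact (closure {x. f x \<noteq> 0})"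
    and "0 \<notin> closure {x. f x \<noteq> 0}"
  shows "(L2norm f)\<^sup>2 \<le> 2 / (hom_dim \<nu> - 2) * L2norm (radial_deriv \<nu> q f)
            * L2norm (\<lambda>x. complex_of_real (q x) * f x)"
proof -
  have nupos: "\<And>i. \<nu> i > 0" using assms(1) unfolding homogeneous_group_def by blast
  define Q where "Q = hom_dim \<nu>"
  have QS: "sum \<nu> UNIV = Q" by (simp add: Q_def hom_dim_def)
  have Q3: "Q > 2" using assms(2) Q_def by simp
  have qc: "continuous_on UNIV q" and qnn: "\<And>x. q x \<ge> 0" and qz: "\<And>x. q x = 0 \<longleftrightarrow> x = 0"
    using assms(3) unfolding hom_quasi_norm_def by auto
  have "C_k (Suc (Suc 0)) f" using assms(4) unfolding smooth_fun_def by blast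
  then have fc: "continuous_on UNIV f" and fd: "\<And>x. f differentiable (at x)"
    and Dc0: "\<And>v. continuous_on UNIV (\<lambda>x. frechet_derivative f (at x) v)"
    by auto
  define D where "D x = frechet_derivative f (at x)" for x
  have fD: "\<And>x. (f has_derivative D x) (at x)"
    using fd unfolding D_def by (simp add: frechet_derivative_works)
  have Dl: "\<And>x. bounded_linear (D x)" using fD has_derivative_bounded_linear by blast
  have Dc: "\<And>v. continuous_on UNIV (\<lambda>x. D x v)" using Dc0 by (simp add: D_def)
  define K where "K = closure {x. f x \<noteq> 0}"
  have cK: "compact K" and K0: "0 \<notin> K" using assms(5,6) by (simp_all add: K_def)
  have clK: "closed K" by (simp add: K_def)
  have fK: "f x = 0" if "x \<notin> K" for x
  proof (rule ccontr)
    assume "f x \<noteq> 0"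
    then have "x \<in> {x. f x \<noteq> 0}" by simp
    then have "x \<in> K" unfolding K_def using closure_subset by (rule subsetD[rotated])
    then show False using that by simp
  qed
  have D0: "D x = (\<lambda>_. 0)" if x: "x \<notin> K" for x
  proof -
    have "((\<lambda>_. 0) has_derivative (\<lambda>_. 0)) (at x)" by simp
    then have "(f has_derivative (\<lambda>_. 0)) (at x)"
      by (rule has_derivative_transform_within_open[where s="- K"]) (use clK x fK in auto)
    then show ?thesis using fD[of x] has_derivative_unique by blast
  qed
  define E where "E x = (\<chi> i. \<nu> i * x $ i)" for x :: "real^'n"
  define G where "G x = D x (E x)" for x
  have Gc: "continuous_on UNIV G" unfolding G_def
    by (rule cont_D_apply[OF Dl Dc]) (auto simp: E_def intro!: continuous_intros)
  have GK: "\<And>x. x \<notin> K \<Longrightarrow> G x = 0" by (simp add: G_def D0)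
  have G0: "G 0 = 0" using K0 GK by blast
  have Rf: "radial_deriv \<nu> q f x = G x / complex_of_real (q x)" for x
  proof (cases "x = 0")
    case True then show ?thesis using G0 by (simp add: radial_deriv_def)
  next
    case False
    then have qp: "q x > 0" using qz qnn by (metis less_eq_real_def)
    define y where "y = dil \<nu> (1 / q x) x"
    have vd: "((\<lambda>r. f (dil \<nu> r y)) has_vector_derivative D (dil \<nu> (q x) y) (edil \<nu> (q x) y)) (at (q x))"
      by (rule fdil_vd[OF fD Dl qp])
    have dy: "dil \<nu> (q x) y = x" using qp by (simp add: y_def dil_dil)
    have ey: "edil \<nu> (q x) y = (1 / q x) *\<^sub>R E x"
    proof -
      have "\<nu> i * q x powr (\<nu> i - 1) * ((1 / q x) powr \<nu> i * x $ i) = 1 / q x * (\<nu> i * x $ i)" for i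
      proof -
        have "q x powr (\<nu> i - 1) * (1 / q x) powr \<nu> i = 1 / q x"
          using qp by (simp add: powr_diff powr_divide)
        then show ?thesis by (metis (no_types, lifting) mult.assoc mult.left_commute)
      qed
      then show ?thesis by (simp add: edil_def y_def dil_def E_def vec_eq_iff)
    qed
    have "radial_deriv \<nu> q f x = D x ((1 / q x) *\<^sub>R E x)"
      using False vd dy ey by (simp add: radial_deriv_def y_def vector_derivative_at)
    also have "\<dots> = (1 / q x) *\<^sub>R G x" using bounded_linear.linear[OF Dl[of x]] by (simp add: G_def linear_cmul)
    also have "\<dots> = G x / complex_of_real (q x)" by (simp add: scaleR_conv_of_real divide_inverse mult.commute)
    finally show ?thesis .
  qed
  have qRf: "G x = complex_of_real (q x) * radial_deriv \<nu> q f x" for x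
  proof (cases "x = 0")
    case True then show ?thesis using G0 qz by simp
  next
    case False then have "q x \<noteq> 0" using qz by simp
    then show ?thesis using Rf[of x] by simp
  qed
  have RfK: "\<And>x. x \<notin> K \<Longrightarrow> radial_deriv \<nu> q f x = 0" using Rf GK by simp
  have Rc: "continuous_on UNIV (radial_deriv \<nu> q f)"
  proof (rule continuous_at_imp_continuous_on, intro ballI)
    fix x :: "real^'n"
    show "isCont (radial_deriv \<nu> q f) x"
    proof (cases "x \<in> K")
      case False
      have "continuous_on (-K) (radial_deriv \<nu> q f)"
        by (rule continuous_on_eq[OF continuous_on_const[of _ 0]]) (use RfK in auto)
      then show ?thesis using False clK continuous_on_eq_continuous_at[of "-K"] by auto
    next
      case True
      then have x0: "x \<noteq> 0" using K0 by auto
      have "continuous_on (-{0}) (\<lambda>x. G x / complex_of_real (q x))"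
        by (intro continuous_intros continuous_on_subset[OF Gc] continuous_on_subset[OF qc]) (auto simp: qz)
      then have "continuous_on (-{0}) (radial_deriv \<nu> q f)"
        by (rule continuous_on_eq) (simp add: Rf)
      then show ?thesis using x0 continuous_on_eq_continuous_at[of "-{0}"] by auto
    qed
  qed
  obtain r0 where r0: "r0 > 0" "\<And>x. x \<in> K \<Longrightarrow> norm x \<le> r0"
    using compact_imp_bounded[OF cK] bounded_pos by metis
  define a0 :: "real^'n" where "a0 = (\<chi> i. - r0)"
  define b0 :: "real^'n" where "b0 = (\<chi> i. r0)"
  have Kbox: "x \<in> cbox a0 b0" if "x \<in> K" for x
  proof -
    have "\<bar>x $ i\<bar> \<le> r0" for i using r0(2)[OF that] component_le_norm_cart[of x i] by linarith
    then have "- r0 \<le> x $ i \<and> x $ i \<le> r0" for i by (metis abs_le_D1 abs_le_D2 minus_le_iff)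
    then show ?thesis by (simp add: mem_box_cart a0_def b0_def)
  qed
  define M where "M = r0 * (\<Sum>i\<in>UNIV. 2 powr \<nu> i)"
  have le2: "2 powr \<nu> i \<le> (\<Sum>i\<in>UNIV. 2 powr \<nu> i)" for i
    by (rule member_le_sum) auto
  have r0M: "r0 * 2 powr \<nu> i \<le> M" for i
    unfolding M_def using r0(1) le2 by (intro mult_left_mono) auto
  have r0M': "r0 \<le> M"
  proof -
    fix i :: 'n
    have "1 \<le> 2 powr \<nu> i" using nupos[of i] by (intro ge_one_powr_ge_zero) (auto simp: less_imp_le)
    then have "r0 * 1 \<le> r0 * 2 powr \<nu> i" using r0(1) by (intro mult_left_mono) auto
    then show ?thesis using r0M[of i] by simp
  qed
  define B :: "(real^'n) set" where "B = cbox (\<chi> i. - M) (\<chi> i. M)"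
  have KB: "x \<in> B" if "x \<in> K" for x
  proof -
    have "\<bar>x $ i\<bar> \<le> M" for i using r0(2)[OF that] component_le_norm_cart[of x i] r0M' by linarith
    then have "- M \<le> x $ i \<and> x $ i \<le> M" for i by (metis abs_le_D1 abs_le_D2 minus_le_iff)
    then show ?thesis by (simp add: mem_box_cart B_def)
  qed
  have dilB: "f (dil \<nu> r x) = 0" if rr: "r \<in> {1/2..2}" and xB: "x \<notin> B" for r x
  proof (rule ccontr)
    assume "f (dil \<nu> r x) \<noteq> 0"
    then have "dil \<nu> r x \<in> K" using fK by blast
    then have nb: "\<bar>r powr \<nu> i * x $ i\<bar> \<le> r0" for i
      using r0(2) component_le_norm_cart[of "dil \<nu> r x" i] by (force simp: dil_def)
    have rpos: "r > 0" using rr by simp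
    have "\<bar>x $ i\<bar> \<le> M" for i
    proof -
      have "(1/2) powr \<nu> i \<le> r powr \<nu> i" using rr nupos[of i] by (intro powr_mono2) auto
      then have rp: "1 / 2 powr \<nu> i \<le> r powr \<nu> i" by (simp add: powr_divide)
      have pp: "0 < 1 / 2 powr \<nu> i" by simp
      have "\<bar>x $ i\<bar> = \<bar>r powr \<nu> i * x $ i\<bar> / r powr \<nu> i" using rpos by (simp add: abs_mult)
      also have "\<dots> \<le> r0 / r powr \<nu> i" using rpos nb[of i] by (intro divide_right_mono) auto
      also have "\<dots> \<le> r0 / (1 / 2 powr \<nu> i)" using r0(1) rp pp rpos by (intro divide_left_mono) auto
      also have "\<dots> = r0 * 2 powr \<nu> i" by simp
      also have "\<dots> \<le> M" by (rule r0M)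
      finally show ?thesis .
    qed
    then have "- M \<le> x $ i \<and> x $ i \<le> M" for i by (metis abs_le_D1 abs_le_D2 minus_le_iff)
    then have "x \<in> B" by (simp add: B_def mem_box_cart)
    with xB show False by simp
  qed
  define h where "h x = (norm (f x))\<^sup>2" for x
  define A where "A = (LINT x|lborel. h x)"
  have hc: "continuous_on UNIV h" unfolding h_def by (intro continuous_intros fc)
  have hK: "\<And>x. x \<notin> K \<Longrightarrow> h x = 0" using fK by (simp add: h_def)
  have hA: "(h has_integral A) UNIV" unfolding A_def by (rule integrable_cont_compact(2)[OF hc cK hK])
  have hbox: "\<And>x. x \<notin> cbox a0 b0 \<Longrightarrow> h x = 0" using Kbox hK by blast
  have Fr: "integral B (\<lambda>x. h (dil \<nu> r x)) = A * r powr (- Q)" if rr: "r \<in> {1/2..2}" for r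
  proof -
    have rpos: "r > 0" using rr by simp
    have "((\<lambda>x. h (dil \<nu> r x)) has_integral A / r powr Q) UNIV"
      using has_integral_dil[OF hA hbox rpos, where \<nu>=\<nu>] QS by simp
    then have "((\<lambda>x. h (dil \<nu> r x)) has_integral A / r powr Q) B"
      by (rule has_integral_restrict_to) (use dilB[OF rr] in \<open>simp add: h_def\<close>)
    then have "integral B (\<lambda>x. h (dil \<nu> r x)) = A / r powr Q" by (rule integral_unique)
    then show ?thesis by (simp add: powr_minus divide_inverse)
  qed
  define fx where "fx r x = 2 * (f (dil \<nu> r x) \<bullet> D (dil \<nu> r x) (edil \<nu> r x))" for r x
  have cdil: "continuous_on ({1/2..2} \<times> B) (\<lambda>p. dil \<nu> (fst p) (snd p))"
    by (rule continuous_on_subset[OF continuous_on_dil[of \<nu>, unfolded split_beta]]) auto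
  have cedil: "continuous_on ({1/2..2} \<times> B) (\<lambda>p. edil \<nu> (fst p) (snd p))"
    by (rule continuous_on_subset[OF continuous_on_edil[of \<nu>, unfolded split_beta]]) auto
  have L: "((\<lambda>r. integral B (\<lambda>x. h (dil \<nu> r x))) has_field_derivative integral B (fx 1)) (at 1 within {1/2..2})"
    unfolding B_def
  proof (rule leibniz_rule_field_derivative)
    fix r x assume "r \<in> {1/2..2::real}"
    then have "r > 0" by simp
    then show "((\<lambda>r. h (dil \<nu> r x)) has_field_derivative fx r x) (at r within {1/2..2})"
      unfolding h_def fx_def by (rule sq_deriv[OF fD Dl])
  next
    fix r :: real assume "r \<in> {1/2..2}"
    have "continuous_on UNIV (\<lambda>x. dil \<nu> r x)" unfolding dil_def by (intro continuous_intros)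
    then have cc: "continuous_on UNIV (\<lambda>x. h (dil \<nu> r x))"
      by (rule continuous_on_compose2[OF hc]) auto
    show "(\<lambda>x. h (dil \<nu> r x)) integrable_on cbox (\<chi> i. - M) (\<chi> i. M)"
      by (rule integrable_continuous, rule continuous_on_subset[OF cc]) simp
  next
    have c1: "continuous_on ({1/2..2} \<times> B) (\<lambda>p. f (dil \<nu> (fst p) (snd p)))"
      by (rule continuous_on_compose2[OF fc cdil]) auto
    have c2: "continuous_on ({1/2..2} \<times> B) (\<lambda>p. D (dil \<nu> (fst p) (snd p)) (edil \<nu> (fst p) (snd p)))"
      by (rule cont_D_apply[OF Dl Dc cdil cedil])
    have "continuous_on ({1/2..2} \<times> B) (\<lambda>p. fx (fst p) (snd p))"
      unfolding fx_def by (intro continuous_intros c1 c2)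
    then show "continuous_on ({1/2..2} \<times> cbox (\<chi> i. - M) (\<chi> i. M)) (\<lambda>(r, x). fx r x)"
      by (simp add: split_beta B_def)
  qed auto
  have at1: "at (1::real) within {1/2..2} = at 1" by (rule at_within_interior) simp
  have L1: "((\<lambda>r. A * r powr (- Q)) has_field_derivative integral B (fx 1)) (at 1)"
    by (rule has_field_derivative_transform_within_open[OF L[unfolded at1], of "{1/2<..<2}"]) (auto simp: Fr)
  have L2: "((\<lambda>r. A * r powr (- Q)) has_field_derivative (- Q * A)) (at 1)"
    by (rule derivative_eq_intros refl | simp)+
  have IQ: "integral B (fx 1) = - Q * A" using DERIV_unique[OF L1 L2] .
  define \<phi> where "\<phi> x = f x \<bullet> G x" for x
  have fx1: "fx 1 = (\<lambda>x. 2 * \<phi> x)"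
    by (simp add: fun_eq_iff fx_def \<phi>_def G_def edil_1 E_def)
  define P where "P = (LINT x|lborel. \<phi> x)"
  have \<phi>c: "continuous_on UNIV \<phi>" unfolding \<phi>_def by (intro continuous_intros fc Gc)
  have \<phi>K: "\<And>x. x \<notin> K \<Longrightarrow> \<phi> x = 0" using fK by (simp add: \<phi>_def)
  have hP: "(\<phi> has_integral P) UNIV" unfolding P_def by (rule integrable_cont_compact(2)[OF \<phi>c cK \<phi>K])
  have "((\<lambda>x. 2 * \<phi> x) has_integral 2 * P) B"
    by (rule has_integral_mult_right, rule has_integral_restrict_to[OF hP]) (use \<phi>K KB in blast)
  then have "integral B (fx 1) = 2 * P" unfolding fx1 by (rule integral_unique)
  then have QAP: "Q * A = - 2 * P" using IQ by simp
  define c where "c x = (norm (complex_of_real (q x) * f x))\<^sup>2" for x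
  define Cc where "Cc = (LINT x|lborel. c x)"
  have cc: "continuous_on UNIV c" unfolding c_def by (intro continuous_intros fc qc)
  have cK: "\<And>x. x \<notin> K \<Longrightarrow> c x = 0" using fK by (simp add: c_def)
  have hC: "(c has_integral Cc) UNIV" unfolding Cc_def by (rule integrable_cont_compact(2)[OF cc \<open>compact K\<close> cK])
  define b where "b x = (norm (radial_deriv \<nu> q f x))\<^sup>2" for x
  define Bb where "Bb = (LINT x|lborel. b x)"
  have bc: "continuous_on UNIV b" unfolding b_def by (intro continuous_intros Rc)
  have bK: "\<And>x. x \<notin> K \<Longrightarrow> b x = 0" using RfK by (simp add: b_def)
  have hBb: "(b has_integral Bb) UNIV" unfolding Bb_def by (rule integrable_cont_compact(2)[OF bc \<open>compact K\<close> bK])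
  have ineq: "Q * A \<le> t * Cc + Bb / t" if tp: "t > 0" for t
  proof -
    have i1: "((\<lambda>x. - \<phi> x) has_integral - P) UNIV" by (rule has_integral_neg[OF hP])
    have i2: "((\<lambda>x. (t * c x + b x / t) / 2) has_integral (t * Cc + Bb / t) / 2) UNIV"
      by (intro has_integral_divide has_integral_add has_integral_mult_right hC hBb)
    have pw: "- \<phi> x \<le> (t * c x + b x / t) / 2" for x
    proof -
      have "- \<phi> x \<le> norm (f x) * norm (G x)"
        using Cauchy_Schwarz_ineq2[of "f x" "G x"] by (simp add: \<phi>_def)
      also have "norm (G x) = q x * norm (radial_deriv \<nu> q f x)"
        using qnn[of x] by (simp add: qRf[of x] norm_mult)
      also have "norm (f x) * (q x * norm (radial_deriv \<nu> q f x)) =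
          (q x * norm (f x)) * norm (radial_deriv \<nu> q f x)" by simp
      also have "\<dots> \<le> (t * (q x * norm (f x))\<^sup>2 + (norm (radial_deriv \<nu> q f x))\<^sup>2 / t) / 2"
        by (rule amgm_t[OF tp])
      also have "\<dots> = (t * c x + b x / t) / 2"
        using qnn[of x] by (simp add: c_def b_def norm_mult)
      finally show ?thesis .
    qed
    have "- P \<le> (t * Cc + Bb / t) / 2" by (rule has_integral_le[OF i1 i2 pw])
    then show ?thesis using QAP by simp
  qed
  have A0: "A \<ge> 0" by (rule has_integral_nonneg[OF hA]) (simp add: h_def)
  have C0: "Cc \<ge> 0" by (rule has_integral_nonneg[OF hC]) (simp add: c_def)
  have B0: "Bb \<ge> 0" by (rule has_integral_nonneg[OF hBb]) (simp add: b_def)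
  have fin: "(sqrt A)\<^sup>2 \<le> 2 / (Q - 2) * sqrt Bb * sqrt Cc"
    by (rule final_arith[OF Q3 A0 B0 C0 ineq])
  have e1: "L2norm f = sqrt A" by (simp add: L2norm_def A_def h_def)
  have e2: "L2norm (radial_deriv \<nu> q f) = sqrt Bb" by (simp add: L2norm_def Bb_def b_def)
  have e3: "L2norm (\<lambda>x. complex_of_real (q x) * f x) = sqrt Cc" by (simp add: L2norm_def Cc_def c_def)
  show ?thesis using fin unfolding e1 e2 e3 Q_def .
qed

end
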